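(* Let $n\le m$, let $\mathbf g\in\mathbb F_{q^m}^n$ have $\mathbb F_q$-linearly independent coordinates, let $1\le k\le n$, let $V\subseteq\mathbb F_{q^m}$ be an $\mathbb F_q$-subspace of dimension $s$ with $0<s<m$, and let $B$ be an $\mathbb F_q$-basis of $\mathbb F_{q^m}$. (1) If $m=n$, then $\mathrm{Stab}_R\bigl(\phi_B^{\mathrm{mat}}(\mathcal G(\mathbf g,k)\cap V^n)\bigr)$ contains an $\mathbb F_q$-subalgebra isomorphic to $\mathbb F_{q^m}$; in particular its $\mathbb F_q$-dimension is at least $m$. (2) For every $\mathbb F_q$-linear code $\mathcal C\subseteq\mathbb F_{q^m}^n$, $\dim_{\mathbb F_q}\mathrm{Ann}_L\bigl(\phi_B^{\mathrm{mat}}(\mathcal C\cap V^n)\bigr)\ge m(m-s)$, and consequently $\dim_{\mathbb F_q}\mathrm{Stab}_L\bigl(\phi_B^{\mathrm{mat}}(\mathcal C\cap V^n)\bigr)\ge m(m-s)+1$.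
   Context: For $B=(b_1,\dots,b_m)$ an $\mathbb F_q$-basis of $\mathbb F_{q^m}$, $\phi_B:\mathbb F_{q^m}\to\mathbb F_q^m$ maps $x=\sum_j x_jb_j$ to $(x_1,\dots,x_m)$, and $\phi_B^{\mathrm{mat}}:\mathbb F_{q^m}^n\to\mathbb F_q^{m\times n}$ maps $(x_1,\dots,x_n)$ to the $m\times n$ matrix whose $i$-th column is $\phi_B(x_i)^\top$. The Gabidulin code $\mathcal G(\mathbf g,k)$ is the $\mathbb F_{q^m}$-linear code generated by the rows of $(g_j^{q^i})_{0\le i<k,\,1\le j\le n}$. $V^n=V\times\cdots\times V$. For a matrix code $\mathcal M\subseteq\mathbb F_q^{m\times n}$: $\mathrm{Stab}_L(\mathcal M)=\{\mathbf P\in\mathbb F_q^{m\times m}:\mathbf P\mathcal M\subseteq\mathcal M\}$, $\mathrm{Stab}_R(\mathcal M)=\{\mathbf N\in\mathbb F_q^{n\times n}:\mathcal M\mathbf N\subseteq\mathcal M\}$, $\mathrm{Ann}_L(\mathcal M)=\{\mathbf A\in\mathbb F_q^{m\times m}:\mathbf A\mathbf C=\mathbf 0\ \forall\mathbf C\in\mathcal M\}$. *)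

theory Defs
  imports "HOL-Analysis.Analysis"
begin

text \<open>F_q is modelled by a finite field type 'a, F_{q^m} by a finite field type 'b
  together with an injective ring homomorphism iota : 'a => 'b (the inclusion of the
  subfield F_q).  The F_q-vector space structure on 'b is scalar multiplication
  c . x = iota c * x.  Vectors of length n are 'b^'n, m x n matrices over F_q are
  'a^'n^'m (m = CARD('m) rows, n = CARD('n) columns).\<close>

definition field_emb :: "('a::field \<Rightarrow> 'b::field) \<Rightarrow> bool" where
  "field_emb \<iota> \<longleftrightarrow> inj \<iota> \<and> \<iota> 1 = 1 \<and> (\<forall>x y. \<iota> (x + y) = \<iota> x + \<iota> y)
      \<and> (\<forall>x y. \<iota> (x * y) = \<iota> x * \<iota> y)"

definition escale :: "('a \<Rightarrow> 'b::field) \<Rightarrow> 'a \<Rightarrow> 'b \<Rightarrow> 'b" where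
  "escale \<iota> c x = \<iota> c * x"

definition vscale :: "('a \<Rightarrow> 'b::field) \<Rightarrow> 'a \<Rightarrow> 'b^'n \<Rightarrow> 'b^'n" where
  "vscale \<iota> c x = (\<chi> j. \<iota> c * x $ j)"

definition mscale :: "'a::field \<Rightarrow> 'a^'n^'m \<Rightarrow> 'a^'n^'m" where
  "mscale c A = (\<chi> i j. c * A $ i $ j)"

definition is_Fq_basis :: "('a::field \<Rightarrow> 'b::field) \<Rightarrow> 'b^'m \<Rightarrow> bool" where
  "is_Fq_basis \<iota> b \<longleftrightarrow> inj (\<lambda>i. b $ i)
      \<and> \<not> module.dependent (escale \<iota>) (range (\<lambda>i. b $ i))
      \<and> module.span (escale \<iota>) (range (\<lambda>i. b $ i)) = UNIV"

definition phiB :: "('a::field \<Rightarrow> 'b::field) \<Rightarrow> 'b^'m \<Rightarrow> 'b \<Rightarrow> 'a^'m" where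
  "phiB \<iota> b x = (THE v. x = (\<Sum>i\<in>UNIV. \<iota> (v $ i) * b $ i))"

definition phiB_mat :: "('a::field \<Rightarrow> 'b::field) \<Rightarrow> 'b^'m \<Rightarrow> 'b^'n \<Rightarrow> 'a^'n^'m" where
  "phiB_mat \<iota> b x = (\<chi> i j. phiB \<iota> b (x $ j) $ i)"

definition gabidulin :: "'a::{finite,field} itself \<Rightarrow> 'b::field^'n \<Rightarrow> nat \<Rightarrow> ('b^'n) set" where
  "gabidulin _ g k = vec.span {(\<chi> j. (g $ j) ^ (CARD('a) ^ i)) | i. i < k}"

definition restrict_V :: "('b^'n) set \<Rightarrow> 'b set \<Rightarrow> ('b^'n) set" where
  "restrict_V C V = {x \<in> C. \<forall>j. x $ j \<in> V}"

definition StabL :: "('a::field^'n^'m) set \<Rightarrow> ('a^'m^'m) set" where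
  "StabL M = {P. \<forall>C\<in>M. P ** C \<in> M}"

definition StabR :: "('a::field^'n^'m) set \<Rightarrow> ('a^'n^'n) set" where
  "StabR M = {N. \<forall>C\<in>M. C ** N \<in> M}"

definition AnnL :: "('a::field^'n^'m) set \<Rightarrow> ('a^'m^'m) set" where
  "AnnL M = {A. \<forall>C\<in>M. A ** C = 0}"

definition mdim :: "('a::field^'n^'m) set \<Rightarrow> nat" where
  "mdim S = vector_space.dim mscale S"

end

theory Submission
  imports Defs "HOL-Computational_Algebra.Polynomial"
begin


lemma card_field_ge2: "CARD('a::{finite,field}) \<ge> 2"
proof -
  have "card {0::'a, 1} \<le> card (UNIV::'a set)" by (rule card_mono) auto
  then show ?thesis by simp
qed

lemma fermat_field: fixes c :: "'a::{finite,field}" shows "c ^ CARD('a) = c"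
proof (cases "c = 0")
  case True then show ?thesis using card_field_ge2[where 'a='a] by simp
next
  case False
  define S where "S = (UNIV::'a set) - {0}"
  have fS: "finite S" by simp
  have bij: "bij_betw ((*) c) S S"
    unfolding bij_betw_def S_def inj_on_def using False
    apply (auto simp: image_def)
    subgoal for x by (rule bexI[of _ "inverse c * x"]) (simp_all add: False)
    done
  have "(\<Prod>x\<in>S. c * x) = (\<Prod>x\<in>S. x)"
    using prod.reindex_bij_betw[OF bij, of "\<lambda>x. x"] by simp
  moreover have "(\<Prod>x\<in>S. c * x) = c ^ card S * (\<Prod>x\<in>S. x)"
    by (simp add: prod.distrib)
  moreover have "(\<Prod>x\<in>S. x) \<noteq> 0" using fS by (simp add: S_def)
  ultimately have "c ^ card S = 1" by simp
  moreover have "card S = CARD('a) - 1" by (simp add: S_def card_Diff_singleton)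
  ultimately have "c ^ (CARD('a) - 1) = 1" by simp
  moreover obtain n where n: "CARD('a) = Suc n" using card_field_ge2[where 'a='a] by (cases "CARD('a)") auto
  ultimately show ?thesis by simp
qed

lemma binom_card_zero:
  assumes "0 < k" "k < CARD('a::{finite,field})"
  shows "(of_nat (CARD('a) choose k) :: 'a) = 0"
proof -
  define q where "q = CARD('a)"
  have q2: "q \<ge> 2" using card_field_ge2[where 'a='a] by (simp add: q_def)
  define P :: "'a poly" where "P = [:1,1:]^q - monom 1 q - 1"
  have cP: "coeff P i = of_nat (q choose i) - (if i = q then 1 else 0) - (if i = 0 then 1 else 0)" for i
  proof (cases "i \<le> q")
    case True then show ?thesis
      by (simp add: P_def coeff_linear_poly_power coeff_monom coeff_1 q_def)
  next
    case False
    then show ?thesis by (simp add: P_def coeff_diff coeff_monom coeff_1 binomial_eq_0 coeff_eq_0 degree_linear_power)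
  qed
  have roots: "poly P x = 0" for x
    using fermat_field[of x] fermat_field[of "1+x"]
    by (simp add: P_def poly_monom q_def algebra_simps)
  have "P = 0"
  proof (rule ccontr)
    assume "P \<noteq> 0"
    then have "card {x. poly P x = 0} \<le> degree P" by (rule card_poly_roots_bound)
    moreover have "degree P \<le> q - 1"
      by (rule degree_le) (use q2 in \<open>auto simp: cP binomial_eq_0\<close>)
    moreover have "card {x. poly P x = 0} = q" using roots by (simp add: q_def)
    ultimately show False using q2 by linarith
  qed
  then have "coeff P k = 0" by simp
  then show ?thesis using assms by (simp add: cP q_def)
qed



lemma (in vector_space) indep_card_le_dim_fin:
  assumes "finite (UNIV::'b set)" "B \<subseteq> S" "independent B"
  shows "card B \<le> dim S"
proof -
  obtain A where A: "A \<subseteq> S" "independent A" "S \<subseteq> span A" "card A = dim S"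
    by (rule basis_exists)
  have fA: "finite A" using assms(1) by (rule finite_subset[rotated]) simp
  have "B \<subseteq> span A" using assms(2) A(3) by (rule order_trans)
  then have "card B \<le> card A"
    using independent_span_bound[OF fA assms(3)] by simp
  then show ?thesis using A(4) by simp
qed

interpretation MS: vector_space "mscale :: 'a::field \<Rightarrow> 'a^'n^'m \<Rightarrow> 'a^'n^'m"
  by unfold_locales (simp_all add: mscale_def vec_eq_iff algebra_simps)

lemma mdim_eq: "mdim S = MS.dim S" by (simp add: mdim_def)

lemma mscale_component[simp]: "mscale c A $ i $ j = c * A $ i $ j"
  by (simp add: mscale_def)

locale emb =
  fixes \<iota> :: "'a::{finite,field} \<Rightarrow> 'b::{finite,field}"
  assumes emb: "field_emb \<iota>"
begin

lemma iota_add: "\<iota> (x + y) = \<iota> x + \<iota> y" and iota_mult: "\<iota> (x * y) = \<iota> x * \<iota> y"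
  and iota_1: "\<iota> 1 = 1" and iota_inj: "inj \<iota>"
  using emb by (auto simp: field_emb_def)

lemma iota_0: "\<iota> 0 = 0"
  by (metis add.right_neutral add_left_cancel iota_add)

lemma iota_power: "\<iota> (c ^ n) = \<iota> c ^ n"
  by (induction n) (simp_all add: iota_1 iota_mult)

lemma iota_of_nat: "\<iota> (of_nat n) = of_nat n"
  by (induction n) (simp_all add: iota_0 iota_add iota_1)

sublocale Fb: vector_space "escale \<iota>"
  by unfold_locales (simp_all add: escale_def iota_add iota_mult iota_1 algebra_simps)

lemma frob_add: "(x + y :: 'b) ^ CARD('a) = x ^ CARD('a) + y ^ CARD('a)"
proof -
  define q where "q = CARD('a)"
  have q2: "q \<ge> 2" using card_field_ge2[where 'a='a] by (simp add: q_def)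
  have z: "(of_nat (q choose k) :: 'b) = 0" if "0 < k" "k < q" for k
    using binom_card_zero[where 'a='a, OF that[unfolded q_def]] iota_of_nat[of "q choose k"] iota_0
    by (simp add: q_def)
  have "(x + y) ^ q = (\<Sum>k\<le>q. of_nat (q choose k) * x ^ k * y ^ (q - k))"
    by (rule binomial_ring)
  also have "\<dots> = (\<Sum>k\<in>{0, q}. of_nat (q choose k) * x ^ k * y ^ (q - k))"
    by (rule sum.mono_neutral_right) (use z in auto)
  also have "\<dots> = x ^ q + y ^ q" using q2 by simp
  finally show ?thesis by (simp add: q_def)
qed

lemma frob_add_pow: "(x + y :: 'b) ^ (CARD('a) ^ i) = x ^ (CARD('a) ^ i) + y ^ (CARD('a) ^ i)"
  by (induction i arbitrary: x y) (simp_all add: power_mult frob_add)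

lemma frob_sum_pow: "(\<Sum>l\<in>L. f l :: 'b) ^ (CARD('a) ^ i) = (\<Sum>l\<in>L. f l ^ (CARD('a) ^ i))"
proof (induction L rule: infinite_finite_induct)
  case (infinite A) then show ?case by simp
next
  case empty then show ?case by simp
next
  case (insert x F) then show ?case by (simp add: frob_add_pow)
qed

lemma iota_pow: "\<iota> c ^ (CARD('a) ^ i) = \<iota> c"
  by (induction i) (simp_all add: power_mult iota_power[symmetric] fermat_field)

end


context emb begin

lemma escale_eq: "escale \<iota> c x = \<iota> c * x" by (simp add: escale_def)

lemma rep_add: assumes "Fb.independent B" "Fb.span B = UNIV"
  shows "Fb.representation B (x + y) z = Fb.representation B x z + Fb.representation B y z"
  using Fb.representation_add[OF assms(1), of y x] assms(2) by simp

lemma rep_scale: assumes "Fb.independent B" "Fb.span B = UNIV"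
  shows "Fb.representation B (\<iota> c * x) z = c * Fb.representation B x z"
  using Fb.representation_scale[OF assms(1), of x c] assms(2) by (simp add: escale_eq)

lemma rep_sum_scale: assumes "Fb.independent B" "Fb.span B = UNIV"
  shows "Fb.representation B (\<Sum>l\<in>L. \<iota> (c l) * y l) z = (\<Sum>l\<in>L. c l * Fb.representation B (y l) z)"
proof -
  have "Fb.representation B (\<Sum>l\<in>L. escale \<iota> (c l) (y l)) z
      = (\<Sum>l\<in>L. Fb.representation B (escale \<iota> (c l) (y l)) z)"
    using Fb.representation_sum[OF assms(1), of L "\<lambda>l. escale \<iota> (c l) (y l)"] assms(2) by simp
  also have "\<dots> = (\<Sum>l\<in>L. c l * Fb.representation B (y l) z)"
    using Fb.representation_scale[OF assms(1)] assms(2) by simp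
  finally show ?thesis by (simp add: escale_eq)
qed

lemma rep_basis: assumes "Fb.independent B" "u \<in> B"
  shows "Fb.representation B u z = (if z = u then 1 else 0)"
  using Fb.representation_basis[OF assms] by simp

lemma rep_expand: assumes "Fb.independent B" "Fb.span B = UNIV" "finite B"
  shows "(\<Sum>y\<in>B. \<iota> (Fb.representation B x y) * y) = x"
  using Fb.sum_representation_eq[OF assms(1) _ assms(3), of x] assms(2) by (simp add: escale_eq)

lemma rep_expand_idx: assumes "Fb.independent (range (\<lambda>i. v $ i))" "Fb.span (range (\<lambda>i. v $ i)) = UNIV"
  "inj (\<lambda>i. v $ i)"
  shows "(\<Sum>i\<in>UNIV. \<iota> (Fb.representation (range (\<lambda>i. v $ i)) x (v $ i)) * v $ i) = x"
proof -
  have "(\<Sum>i\<in>UNIV. \<iota> (Fb.representation (range (\<lambda>i. v $ i)) x (v $ i)) * v $ i)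
     = (\<Sum>y\<in>range (\<lambda>i. v $ i). \<iota> (Fb.representation (range (\<lambda>i. v $ i)) x y) * y)"
    by (rule sum.reindex[OF assms(3), symmetric, unfolded comp_def])
  also have "\<dots> = x" by (rule rep_expand[OF assms(1,2)]) simp
  finally show ?thesis .
qed

lemma rep_idx_coeff: assumes "Fb.independent (range (\<lambda>i. v $ i))" "Fb.span (range (\<lambda>i. v $ i)) = UNIV"
  "inj (\<lambda>i. v $ i)"
  shows "Fb.representation (range (\<lambda>i. v $ i)) (\<Sum>i\<in>UNIV. \<iota> (c i) * v $ i) (v $ j) = c j"
proof -
  have "Fb.representation (range (\<lambda>i. v $ i)) (\<Sum>i\<in>UNIV. \<iota> (c i) * v $ i) (v $ j)
     = (\<Sum>i\<in>UNIV. c i * Fb.representation (range (\<lambda>i. v $ i)) (v $ i) (v $ j))"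
    by (rule rep_sum_scale[OF assms(1,2)])
  also have "\<dots> = (\<Sum>i\<in>UNIV. c i * (if j = i then 1 else 0))"
    using assms(3) by (intro sum.cong refl) (simp add: rep_basis[OF assms(1)] inj_eq)
  also have "\<dots> = c j" by (simp add: if_distrib cong: if_cong)
  finally show ?thesis .
qed

end

locale embb = emb \<iota> for \<iota> :: "'a::{finite,field} \<Rightarrow> 'b::{finite,field}" +
  fixes b :: "'b^'m"
  assumes basis: "is_Fq_basis \<iota> b"
begin

abbreviation "Bb \<equiv> range (\<lambda>i. b $ i)"

lemma b_inj: "inj (\<lambda>i. b $ i)" and Bb_indep: "Fb.independent Bb" and Bb_span: "Fb.span Bb = UNIV"
  using basis by (auto simp: is_Fq_basis_def)

sublocale Fd: finite_dimensional_vector_space "escale \<iota>" Bb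
  by unfold_locales (simp_all add: Bb_indep Bb_span)

lemma dim_UNIV_m: "Fb.dim (UNIV::'b set) = CARD('m)"
  using Fd.dim_UNIV card_image[OF b_inj] by simp

lemma phiB_eq: "phiB \<iota> b x = (\<chi> j. Fb.representation Bb x (b $ j))"
  unfolding phiB_def
proof (rule the_equality)
  show "x = (\<Sum>i\<in>UNIV. \<iota> ((\<chi> j. Fb.representation Bb x (b $ j)) $ i) * b $ i)"
    using rep_expand_idx[OF Bb_indep Bb_span b_inj] by simp
next
  fix v assume "x = (\<Sum>i\<in>UNIV. \<iota> (v $ i) * b $ i)"
  then show "v = (\<chi> j. Fb.representation Bb x (b $ j))"
    using rep_idx_coeff[OF Bb_indep Bb_span b_inj] by (simp add: vec_eq_iff)
qed

lemma phiB_comp: "phiB \<iota> b x $ j = Fb.representation Bb x (b $ j)"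
  by (simp add: phiB_eq)

lemma phiB_expand: "(\<Sum>i\<in>UNIV. \<iota> (phiB \<iota> b x $ i) * b $ i) = x"
  using rep_expand_idx[OF Bb_indep Bb_span b_inj] by (simp add: phiB_comp)

lemma phiB_sum: "phiB \<iota> b (\<Sum>l\<in>L. \<iota> (c l) * y l) $ k = (\<Sum>l\<in>L. c l * phiB \<iota> b (y l) $ k)"
  by (simp add: phiB_comp rep_sum_scale[OF Bb_indep Bb_span])

lemma phiB_0: "phiB \<iota> b 0 = 0"
  by (simp add: phiB_eq Fb.representation_zero vec_eq_iff)

lemma phiB_nz: "x \<noteq> 0 \<Longrightarrow> phiB \<iota> b x \<noteq> 0"
  using phiB_expand[of x] by (auto simp: iota_0)

lemma phiB_mat_0: "phiB_mat \<iota> b 0 = 0"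
  by (simp add: phiB_mat_def phiB_0 vec_eq_iff)

end


context emb begin
lemma vs_vscale: "vector_space (vscale \<iota> :: 'a \<Rightarrow> 'b^'n \<Rightarrow> 'b^'n)"
  by unfold_locales (simp_all add: vscale_def vec_eq_iff iota_add iota_mult iota_1 algebra_simps)

lemma subspace_vscale_0: "module.subspace (vscale \<iota>) (C :: ('b^'n) set) \<Longrightarrow> 0 \<in> C"
  using vs_vscale module.subspace_def module_iff_vector_space by blast
end

context embb begin

lemma part2:
  fixes V :: "'b set" and C :: "('b^'n) set"
  assumes V_sub: "Fb.subspace V" and V_dim: "Fb.dim V = s" and s: "0 < s" "s < CARD('m)"
    and C: "module.subspace (vscale \<iota>) C"
  shows "mdim (AnnL (phiB_mat \<iota> b ` restrict_V C V)) \<ge> CARD('m) * (CARD('m) - s)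
      \<and> mdim (StabL (phiB_mat \<iota> b ` restrict_V C V)) \<ge> CARD('m) * (CARD('m) - s) + 1"
proof -
  let ?M = "phiB_mat \<iota> b ` restrict_V C V"
  obtain Bv where Bv: "Bv \<subseteq> V" "Fb.independent Bv" "V \<subseteq> Fb.span Bv" "card Bv = Fb.dim V"
    by (rule Fb.basis_exists)
  have cBv: "card Bv = s" using Bv(4) V_dim by simp
  obtain B' where B': "Bv \<subseteq> B'" "B' \<subseteq> UNIV" "Fb.independent B'" "UNIV \<subseteq> Fb.span B'"
    by (rule Fb.maximal_independent_subset_extend[OF subset_UNIV Bv(2)])
  have B'span: "Fb.span B' = UNIV" using B' by auto
  have finB': "finite B'" by simp
  have cardB': "card B' = CARD('m)"
    using Fb.basis_card_eq_dim[of B' UNIV] B'(3,4) dim_UNIV_m by simp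
  define U where "U = B' - Bv"
  have cardU: "card U = CARD('m) - s"
    using card_Diff_subset[of Bv B'] B'(1) cBv cardB' finite_subset[OF B'(1) finB'] by (simp add: U_def)
  define lam where "lam u x = Fb.representation B' x u" for u x
  define E :: "'m \<Rightarrow> 'b \<Rightarrow> 'a^'m^'m" where
    "E i u = (\<chi> i' j. if i' = i then lam u (b $ j) else 0)" for i u
  have lam_sum: "(\<Sum>j\<in>UNIV. lam u (b $ j) * phiB \<iota> b x $ j) = lam u x" for u x
  proof -
    have "(\<Sum>j\<in>UNIV. lam u (b $ j) * phiB \<iota> b x $ j) = (\<Sum>j\<in>UNIV. phiB \<iota> b x $ j * lam u (b $ j))"
      by (simp add: mult.commute)
    also have "\<dots> = lam u (\<Sum>j\<in>UNIV. \<iota> (phiB \<iota> b x $ j) * b $ j)"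
      unfolding lam_def by (rule rep_sum_scale[OF B'(3) B'span, symmetric])
    also have "\<dots> = lam u x" by (simp add: phiB_expand)
    finally show ?thesis .
  qed
  have Eapp: "(\<Sum>j\<in>UNIV. E i u $ i' $ j * phiB \<iota> b x $ j) = (if i' = i then lam u x else 0)" for i u i' x
    by (simp add: E_def lam_sum)
  have lamV: "lam u v = 0" if "v \<in> V" "u \<in> U" for u v
  proof -
    have "lam u v = Fb.representation Bv v u"
      unfolding lam_def using Fb.representation_extend[OF B'(3) _ B'(1)] Bv(3) that(1) by auto
    then show ?thesis using Fb.representation_ne_zero[of Bv v u] that(2) by (auto simp: U_def)
  qed
  have lamB: "lam u u' = (if u = u' then 1 else 0)" if "u' \<in> B'" for u u'
    unfolding lam_def using rep_basis[OF B'(3) that] by simp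
  define K where "K = {A::'a^'m^'m. \<forall>v\<in>V. \<forall>i. (\<Sum>j\<in>UNIV. A $ i $ j * phiB \<iota> b v $ j) = 0}"
  have EK: "E i u \<in> K" if "u \<in> U" for i u
    unfolding K_def using Eapp lamV that by simp
  have Ksub: "MS.subspace K"
    unfolding MS.subspace_def K_def
    by (auto simp: distrib_right sum.distrib mult.assoc simp flip: sum_distrib_left)
  define SE where "SE = (\<lambda>(i, u). E i u) ` (UNIV \<times> U)"
  have SEK: "SE \<subseteq> K" using EK by (auto simp: SE_def)
  have spanK: "MS.span SE \<subseteq> K" by (rule MS.span_minimal[OF SEK Ksub])
  have UB': "U \<subseteq> B'" by (auto simp: U_def)
  have Eval: "(\<Sum>j\<in>UNIV. E i u $ i0 $ j * phiB \<iota> b u0 $ j) = (if i0 = i \<and> u = u0 then 1 else 0)"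
    if "u0 \<in> U" for i u i0 u0
    using Eapp lamB UB' that by auto
  have Einj: "inj_on (\<lambda>(i, u). E i u) (UNIV \<times> U)"
  proof (rule inj_onI, clarify)
    fix i u i' u' assume u: "u \<in> U" "u' \<in> U" and eq: "E i u = E i' u'"
    have "(\<Sum>j\<in>UNIV. E i u $ i $ j * phiB \<iota> b u $ j) = 1" using Eval[OF u(1)] by simp
    then have "(\<Sum>j\<in>UNIV. E i' u' $ i $ j * phiB \<iota> b u $ j) = 1" using eq by simp
    then show "i = i' \<and> u = u'" using Eval[OF u(1), of i' u' i] by (simp split: if_splits)
  qed
  have cardSE: "card SE = CARD('m) * (CARD('m) - s)"
    unfolding SE_def using card_image[OF Einj] cardU by (simp add: card_cartesian_product)
  have indSE: "MS.independent SE"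
  proof (rule MS.independent_if_scalars_zero)
    show "finite SE" by simp
  next
    fix f x assume sum0: "(\<Sum>A\<in>SE. mscale (f A) A) = 0" and x: "x \<in> SE"
    then obtain i0 u0 where x': "x = E i0 u0" "u0 \<in> U" by (auto simp: SE_def)
    define ev where "ev A = (\<Sum>j\<in>UNIV. A $ i0 $ j * phiB \<iota> b u0 $ j)" for A :: "'a^'m^'m"
    have "ev (\<Sum>A\<in>SE. mscale (f A) A) = (\<Sum>j\<in>UNIV. (\<Sum>A\<in>SE. f A * A $ i0 $ j) * phiB \<iota> b u0 $ j)"
      unfolding ev_def sum_component by simp
    also have "\<dots> = (\<Sum>j\<in>UNIV. \<Sum>A\<in>SE. f A * (A $ i0 $ j * phiB \<iota> b u0 $ j))"
      by (simp add: sum_distrib_right mult.assoc)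
    also have "\<dots> = (\<Sum>A\<in>SE. \<Sum>j\<in>UNIV. f A * (A $ i0 $ j * phiB \<iota> b u0 $ j))"
      by (rule sum.swap)
    also have "\<dots> = (\<Sum>A\<in>SE. f A * ev A)"
      by (simp add: ev_def sum_distrib_left)
    also have "\<dots> = (\<Sum>A\<in>SE. if A = x then f A else 0)"
    proof (rule sum.cong[OF refl])
      fix A assume "A \<in> SE"
      then obtain i u where A: "A = E i u" "u \<in> U" by (auto simp: SE_def)
      have "(A = x) = (i0 = i \<and> u = u0)"
        using Einj A x' unfolding inj_on_def by force
      then show "f A * ev A = (if A = x then f A else 0)"
        unfolding ev_def using Eval[OF x'(2), of i u i0] A by simp
    qed
    also have "\<dots> = f x" using x by simp
    finally show "f x = 0" using sum0 by (simp add: ev_def)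
  qed
  have "Bv \<noteq> {}" using cBv s by auto
  then obtain v where v: "v \<in> Bv" by blast
  have "v \<noteq> 0" using Fb.dependent_zero[of Bv] Bv(2) v by blast
  then obtain i where i: "phiB \<iota> b v $ i \<noteq> 0" using phiB_nz[of v] by (auto simp: vec_eq_iff)
  have vV: "v \<in> V" using v Bv(1) by blast
  have "(\<Sum>j\<in>UNIV. mat 1 $ i $ j * phiB \<iota> b v $ j) = (\<Sum>j\<in>UNIV. if i = j then phiB \<iota> b v $ j else 0)"
    by (rule sum.cong) (simp_all add: mat_def)
  then have "(\<Sum>j\<in>UNIV. mat 1 $ i $ j * phiB \<iota> b v $ j) = phiB \<iota> b v $ i"
    by simp
  note eq1 = this
  have IK: "mat 1 \<notin> K"
  proof
    assume "mat 1 \<in> K"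
    then have "(\<Sum>j\<in>UNIV. mat 1 $ i $ j * phiB \<iota> b v $ j) = 0" using vV unfolding K_def by blast
    then show False using eq1 i by simp
  qed
  have KA: "K \<subseteq> AnnL ?M"
  proof
    fix A assume A: "A \<in> K"
    show "A \<in> AnnL ?M"
      unfolding AnnL_def
    proof (clarify)
      fix x assume "x \<in> restrict_V C V"
      then have "\<forall>j. x $ j \<in> V" by (simp add: restrict_V_def)
      then show "A ** phiB_mat \<iota> b x = 0"
        using A unfolding K_def by (simp add: vec_eq_iff matrix_matrix_mult_def phiB_mat_def)
    qed
  qed
  have zM: "0 \<in> ?M"
  proof -
    have "0 \<in> restrict_V C V"
      using subspace_vscale_0[OF C] Fb.subspace_0[OF V_sub] by (simp add: restrict_V_def)
    then show ?thesis using phiB_mat_0 by (metis image_eqI)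
  qed
  have KS: "insert (mat 1) K \<subseteq> StabL ?M"
  proof
    fix A assume "A \<in> insert (mat 1) K"
    then show "A \<in> StabL ?M"
    proof
      assume "A = mat 1" then show ?thesis by (simp add: StabL_def matrix_mul_lid)
    next
      assume "A \<in> K" then have "A \<in> AnnL ?M" using KA by blast
      then show ?thesis using zM by (simp add: StabL_def AnnL_def)
    qed
  qed
  have 1: "card SE \<le> mdim (AnnL ?M)"
    unfolding mdim_eq using MS.indep_card_le_dim_fin[of SE "AnnL ?M"] indSE SEK KA by auto
  have ind2: "MS.independent (insert (mat 1) SE)"
    using MS.independent_insert[of "mat 1" SE] indSE spanK IK SEK by auto
  have finSE: "finite SE" by simp
  have "card (insert (mat 1) SE) = card SE + 1"
    using IK SEK finSE by (auto simp: card_insert_if)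
  moreover have "card (insert (mat 1) SE) \<le> mdim (StabL ?M)"
    unfolding mdim_eq using MS.indep_card_le_dim_fin[of "insert (mat 1) SE" "StabL ?M"] ind2 SEK KS by auto
  ultimately show ?thesis using 1 cardSE by simp
qed

end


context embb begin

lemma part1:
  fixes g :: "'b^'n" and V :: "'b set" and k :: nat
  assumes nm: "CARD('m) = CARD('n)"
    and g_indep: "inj (\<lambda>j. g $ j) \<and> \<not> Fb.dependent (range (\<lambda>j. g $ j))"
    and V_sub: "Fb.subspace V"
  shows "(\<exists>f :: 'b \<Rightarrow> 'a^'n^'n.
            inj f \<and> f 1 = mat 1
          \<and> (\<forall>x y. f (x + y) = f x + f y)
          \<and> (\<forall>x y. f (x * y) = f x ** f y)
          \<and> (\<forall>c x. f (\<iota> c * x) = mscale c (f x))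
          \<and> range f \<subseteq> StabR (phiB_mat \<iota> b ` restrict_V (gabidulin TYPE('a) g k) V))
      \<and> mdim (StabR (phiB_mat \<iota> b ` restrict_V (gabidulin TYPE('a) g k) V)) \<ge> CARD('m)"
proof -
  let ?M = "phiB_mat \<iota> b ` restrict_V (gabidulin TYPE('a) g k) V"
  define Bg where "Bg = range (\<lambda>j. g $ j)"
  have ginj: "inj (\<lambda>j. g $ j)" and gind: "Fb.independent Bg"
    using g_indep by (auto simp: Bg_def)
  have cardBg: "card Bg = Fb.dim (UNIV::'b set)"
    using card_image[OF ginj] nm dim_UNIV_m by (simp add: Bg_def)
  have gspan: "Fb.span Bg = UNIV"
    using Fd.card_eq_dim[of Bg UNIV] cardBg gind by auto
  note gind' = gind[unfolded Bg_def] and gspan' = gspan[unfolded Bg_def]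
  define R where "R x y = Fb.representation Bg x y" for x y
  define N :: "'b \<Rightarrow> 'a^'n^'n" where "N x = (\<chi> i j. R (x * g $ j) (g $ i))" for x
  have key: "x * g $ j = (\<Sum>i\<in>UNIV. \<iota> (N x $ i $ j) * g $ i)" for x j
    using rep_expand_idx[OF gind' gspan' ginj, of "x * g $ j"] by (simp add: N_def R_def Bg_def)
  have Radd: "R (x + y) z = R x z + R y z" for x y z
    unfolding R_def by (rule rep_add[OF gind gspan])
  have Rscale: "R (\<iota> c * x) z = c * R x z" for c x z
    unfolding R_def by (rule rep_scale[OF gind gspan])
  have Rsum: "R (\<Sum>l\<in>L. \<iota> (c l) * y l) z = (\<Sum>l\<in>L. c l * R (y l) z)" for L c y z
    unfolding R_def by (rule rep_sum_scale[OF gind gspan])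
  have Rg: "R (g $ j) (g $ i) = (if i = j then 1 else 0)" for i j
    unfolding R_def using rep_basis[OF gind, of "g $ j" "g $ i"] ginj by (auto simp: Bg_def inj_eq)
  have N1: "N 1 = mat 1"
    by (simp add: N_def mat_def Rg vec_eq_iff)
  have Nadd: "N (x + y) = N x + N y" for x y
    by (simp add: N_def vec_eq_iff distrib_right Radd)
  have Nscale: "N (\<iota> c * x) = mscale c (N x)" for c x
    by (simp add: N_def vec_eq_iff mult.assoc Rscale)
  have Nmult: "N (x * y) = N x ** N y" for x y
  proof -
    have "R (x * y * g $ j) (g $ i) = (\<Sum>l\<in>UNIV. N x $ i $ l * N y $ l $ j)" for i j
    proof -
      have "x * y * g $ j = (\<Sum>l\<in>UNIV. \<iota> (N y $ l $ j) * (x * g $ l))"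
        by (subst mult.assoc, subst key[of y j]) (simp add: sum_distrib_left mult.left_commute)
      then have "R (x * y * g $ j) (g $ i) = (\<Sum>l\<in>UNIV. N y $ l $ j * R (x * g $ l) (g $ i))"
        by (simp add: Rsum)
      then show ?thesis by (simp add: N_def mult.commute)
    qed
    then show ?thesis by (simp add: N_def vec_eq_iff matrix_matrix_mult_def)
  qed
  have Ninj: "inj N"
  proof (rule injI)
    fix x y assume eq: "N x = N y"
    obtain j0 :: 'n where True by simp
    have "x * g $ j0 = y * g $ j0" by (subst (1 2) key) (simp add: eq)
    moreover have "g $ j0 \<noteq> 0"
    proof
      assume "g $ j0 = 0"
      then have "0 \<in> Bg" by (auto simp: Bg_def intro: range_eqI[of _ _ j0])
      then show False using Fb.dependent_zero gind by blast
    qed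
    ultimately show "x = y" by simp
  qed
  have NStab: "range N \<subseteq> StabR ?M"
  proof (clarsimp simp: StabR_def)
    fix \<alpha> z assume z: "z \<in> restrict_V (gabidulin TYPE('a) g k) V"
    define T :: "'b^'n \<Rightarrow> 'b^'n" where "T w = (\<chi> j. \<Sum>i\<in>UNIV. \<iota> (N \<alpha> $ i $ j) * w $ i)" for w
    have pT: "phiB \<iota> b (T w $ j) $ i = (\<Sum>l\<in>UNIV. N \<alpha> $ l $ j * phiB \<iota> b (w $ l) $ i)" for w i j
      unfolding T_def by (simp only: vec_lambda_beta phiB_sum)
    have matT: "phiB_mat \<iota> b w ** N \<alpha> = phiB_mat \<iota> b (T w)" for w
      by (simp add: vec_eq_iff matrix_matrix_mult_def phiB_mat_def pT mult.commute)
    have zV: "\<forall>j. z $ j \<in> V" and zG: "z \<in> gabidulin TYPE('a) g k"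
      using z by (auto simp: restrict_V_def)
    have TV: "\<forall>j. T z $ j \<in> V"
    proof
      fix j
      show "T z $ j \<in> V"
        unfolding T_def vec_lambda_beta
      proof (rule Fb.subspace_sum[OF V_sub])
        fix i show "\<iota> (N \<alpha> $ i $ j) * z $ i \<in> V"
          using Fb.subspace_scale[OF V_sub zV[rule_format, of i], of "N \<alpha> $ i $ j"] by (simp add: escale_eq)
      qed
    qed
    define Rows where "Rows = {(\<chi> j. (g $ j) ^ (CARD('a) ^ i)) | i. i < k}"
    have TR: "T w \<in> vec.span Rows" if wR: "w \<in> Rows" for w
    proof -
      obtain i where w: "w = (\<chi> j. (g $ j) ^ (CARD('a) ^ i))" "i < k"
        using wR by (auto simp: Rows_def)
      have "T w = (\<alpha> ^ (CARD('a) ^ i)) *s w"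
      proof -
        have "T w $ j = \<alpha> ^ (CARD('a) ^ i) * w $ j" for j
        proof -
          have "T w $ j = (\<Sum>l\<in>UNIV. (\<iota> (N \<alpha> $ l $ j) * g $ l) ^ (CARD('a) ^ i))"
            by (simp add: T_def w power_mult_distrib iota_pow)
          also have "\<dots> = (\<Sum>l\<in>UNIV. \<iota> (N \<alpha> $ l $ j) * g $ l) ^ (CARD('a) ^ i)"
            by (simp add: frob_sum_pow)
          also have "\<dots> = (\<alpha> * g $ j) ^ (CARD('a) ^ i)"
            by (simp add: key[symmetric])
          finally show ?thesis by (simp add: w power_mult_distrib)
        qed
        then show ?thesis by (simp add: vec_eq_iff)
      qed
      then show ?thesis using wR by (simp add: vec.span_scale vec.span_base)
    qed
    have Tspan: "T w \<in> vec.span Rows" if "w \<in> vec.span Rows" for w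
      using that
    proof (induction rule: vec.span_induct_alt)
      case base
      have "T 0 = 0" by (simp add: T_def vec_eq_iff)
      then show ?case by (simp add: vec.span_zero)
    next
      case (step c x y)
      have "T (c *s x + y) = c *s T x + T y"
        by (simp add: T_def vec_eq_iff sum.distrib sum_distrib_left algebra_simps)
      then show ?case using TR[OF step(1)] step(2) by (simp add: vec.span_add vec.span_scale)
    qed
    have "T z \<in> gabidulin TYPE('a) g k"
      using Tspan zG by (simp add: gabidulin_def Rows_def)
    then have "T z \<in> restrict_V (gabidulin TYPE('a) g k) V"
      using TV by (simp add: restrict_V_def)
    then show "phiB_mat \<iota> b z ** N \<alpha> \<in> ?M"
      unfolding matT by blast
  qed
  have hom: "module_hom (escale \<iota>) mscale N"
    unfolding module_hom_def module_hom_axioms_def module_iff_vector_space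
    using Fb.vector_space_axioms MS.vector_space_axioms Nadd Nscale by (simp add: escale_eq)
  have MSB: "MS.independent (N ` Bb)"
    using module_hom.independent_injective_image[OF hom Bb_indep] inj_on_subset[OF Ninj subset_UNIV]
    by simp
  have "card (N ` Bb) = CARD('m)"
    using card_image[OF inj_on_subset[OF Ninj subset_UNIV]] card_image[OF b_inj] by simp
  moreover have "card (N ` Bb) \<le> mdim (StabR ?M)"
    unfolding mdim_eq using MS.indep_card_le_dim_fin[OF _ _ MSB] NStab by auto
  ultimately show ?thesis
    using Ninj N1 Nadd Nmult Nscale NStab by (intro conjI exI[of _ N]) auto
qed

end
theorem mainTheorem5:
  fixes \<iota> :: "'a::{finite,field} \<Rightarrow> 'b::{finite,field}"
    and b :: "'b^'m"
    and g :: "'b^'n"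
    and k s :: nat
    and V :: "'b set"
  assumes emb: "field_emb \<iota>"
    and basis: "is_Fq_basis \<iota> b"
    and nm: "CARD('n) \<le> CARD('m)"
    and g_indep: "inj (\<lambda>j. g $ j) \<and> \<not> module.dependent (escale \<iota>) (range (\<lambda>j. g $ j))"
    and k: "1 \<le> k" "k \<le> CARD('n)"
    and V_sub: "module.subspace (escale \<iota>) V"
    and V_dim: "vector_space.dim (escale \<iota>) V = s"
    and s: "0 < s" "s < CARD('m)"
  shows
    "(CARD('m) = CARD('n) \<longrightarrow>
        (\<exists>f :: 'b \<Rightarrow> 'a^'n^'n.
            inj f \<and> f 1 = mat 1
          \<and> (\<forall>x y. f (x + y) = f x + f y)
          \<and> (\<forall>x y. f (x * y) = f x ** f y)
          \<and> (\<forall>c x. f (\<iota> c * x) = mscale c (f x))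
          \<and> range f \<subseteq> StabR (phiB_mat \<iota> b ` restrict_V (gabidulin TYPE('a) g k) V))
      \<and> mdim (StabR (phiB_mat \<iota> b ` restrict_V (gabidulin TYPE('a) g k) V)) \<ge> CARD('m))
   \<and> (\<forall>C :: ('b^'n) set. module.subspace (vscale \<iota>) C \<longrightarrow>
        mdim (AnnL (phiB_mat \<iota> b ` restrict_V C V)) \<ge> CARD('m) * (CARD('m) - s)
      \<and> mdim (StabL (phiB_mat \<iota> b ` restrict_V C V)) \<ge> CARD('m) * (CARD('m) - s) + 1)"
proof -
  interpret embb \<iota> b
    unfolding embb_def embb_axioms_def emb_def using emb basis by simp
  have 1: "CARD('m) = CARD('n) \<longrightarrow>
        (\<exists>f :: 'b \<Rightarrow> 'a^'n^'n.
            inj f \<and> f 1 = mat 1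
          \<and> (\<forall>x y. f (x + y) = f x + f y)
          \<and> (\<forall>x y. f (x * y) = f x ** f y)
          \<and> (\<forall>c x. f (\<iota> c * x) = mscale c (f x))
          \<and> range f \<subseteq> StabR (phiB_mat \<iota> b ` restrict_V (gabidulin TYPE('a) g k) V))
      \<and> mdim (StabR (phiB_mat \<iota> b ` restrict_V (gabidulin TYPE('a) g k) V)) \<ge> CARD('m)"
    by (intro impI) (rule part1[OF _ g_indep V_sub])
  have 2: "\<forall>C :: ('b^'n) set. module.subspace (vscale \<iota>) C \<longrightarrow>
        mdim (AnnL (phiB_mat \<iota> b ` restrict_V C V)) \<ge> CARD('m) * (CARD('m) - s)
      \<and> mdim (StabL (phiB_mat \<iota> b ` restrict_V C V)) \<ge> CARD('m) * (CARD('m) - s) + 1"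
    by (intro allI impI) (rule part2[OF V_sub V_dim s])
  show ?thesis by (rule conjI[OF 1 2])
qed

end
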